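(* Let $\mu$ be a centrally symmetric Borel probability measure on the unit sphere $S^2\subset\mathbb R^3$ (i.e. $\mu(-E)=\mu(E)$ for Borel $E$). For $\mathbf n_0\in\mathbb R^3$ with $|\mathbf n_0|\le1$, $\lambda\in[-1,1]$ and a Borel function $g:S^2\to[0,1]$, define $$x_0(\lambda,\mathbf n_0,g)=\int\big[1_{\mathbf n_0^T\mathbf n>\lambda}(\mathbf n)+g(\mathbf n)1_{\mathbf n_0^T\mathbf n=\lambda}(\mathbf n)\big]\,d\mu(\mathbf n),\qquad \mathbf b(\lambda,\mathbf n_0,g)=\int\big[1_{\mathbf n_0^T\mathbf n>\lambda}(\mathbf n)+g(\mathbf n)1_{\mathbf n_0^T\mathbf n=\lambda}(\mathbf n)\big]\,\mathbf n\,d\mu(\mathbf n).$$ If $x_0(\lambda,\mathbf n_0,g)=\tfrac12$, then $\mathbf b(0,\mathbf n_0,g)=\mathbf b(\lambda,\mathbf n_0,g)$.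
   Context: $1_X$ denotes the indicator function of a set $X\subseteq S^2$. (In the paper, the points $(x_0,\mathbf b)$ parametrize the boundary of the box generated by the ansatz $\mu$, and $x_0=\tfrac12$ is the cross-section relevant for T-states.) *)

theory Defs
  imports "HOL-Probability.Probability"
begin

definition box_weight :: "real \<Rightarrow> real^3 \<Rightarrow> (real^3 \<Rightarrow> real) \<Rightarrow> real^3 \<Rightarrow> real" where
  "box_weight lam n0 g n =
     indicator {m. n0 \<bullet> m > lam} n + g n * indicator {m. n0 \<bullet> m = lam} n"

definition box_x0 :: "(real^3) measure \<Rightarrow> real \<Rightarrow> real^3 \<Rightarrow> (real^3 \<Rightarrow> real) \<Rightarrow> real" where
  "box_x0 \<mu> lam n0 g = (\<integral>n. box_weight lam n0 g n \<partial>\<mu>)"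

definition box_b :: "(real^3) measure \<Rightarrow> real \<Rightarrow> real^3 \<Rightarrow> (real^3 \<Rightarrow> real) \<Rightarrow> real^3" where
  "box_b \<mu> lam n0 g = (\<integral>n. box_weight lam n0 g n *\<^sub>R n \<partial>\<mu>)"

end

theory Submission imports Defs begin

theorem lemma3:
  fixes \<mu> :: "(real^3) measure" and n0 :: "real^3" and lam :: real
    and g :: "real^3 \<Rightarrow> real"
  assumes prob: "prob_space \<mu>"
    and space: "space \<mu> = sphere 0 1"
    and sets: "sets \<mu> = sets (restrict_space borel (sphere (0::real^3) 1))"
    and symm: "\<forall>E \<in> sets \<mu>. emeasure \<mu> (uminus ` E) = emeasure \<mu> E"
    and n0: "norm n0 \<le> 1"
    and lam: "-1 \<le> lam" "lam \<le> 1"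
    and g_meas: "g \<in> borel_measurable \<mu>"
    and g_range: "\<forall>n \<in> space \<mu>. 0 \<le> g n \<and> g n \<le> 1"
    and half: "box_x0 \<mu> lam n0 g = 1/2"
  shows "box_b \<mu> 0 n0 g = box_b \<mu> lam n0 g"
proof -
  interpret prob_space \<mu> by (rule prob)
  have tm[measurable]: "(\<lambda>n. n0 \<bullet> n) \<in> borel_measurable \<mu>"
    by (subst measurable_cong_sets[OF sets refl]) (intro measurable_restrict_space1 borel_measurable_continuous_onI continuous_intros)
  note g_meas[measurable]
  have idm[measurable]: "(\<lambda>n. n) \<in> borel_measurable \<mu>"
    by (subst measurable_cong_sets[OF sets refl]) (intro measurable_restrict_space1 measurable_ident_sets refl)
  define W where "W l n = box_weight l n0 g n" for l n
  have Wm[measurable]: "W l \<in> borel_measurable \<mu>" for l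
    unfolding W_def box_weight_def by measurable
  have Wb: "norm (W l n) \<le> 2" if "n \<in> space \<mu>" for l n
    using g_range that unfolding W_def box_weight_def by (auto simp: indicator_def)
  have Wint: "integrable \<mu> (W l)" for l
    by (rule integrable_const_bound[where B=2]) (use Wb in \<open>auto intro!: AE_I2\<close>)
  have Wbm: "(\<lambda>n. W l n *\<^sub>R n) \<in> borel_measurable \<mu>" for l by measurable
  define P where "P = {n \<in> space \<mu>. n0 \<bullet> n > 0}"
  define Z where "Z = {n \<in> space \<mu>. n0 \<bullet> n = 0}"
  define N where "N = {n \<in> space \<mu>. n0 \<bullet> n < 0}"
  have [measurable]: "P \<in> sets \<mu>" "Z \<in> sets \<mu>" "N \<in> sets \<mu>" unfolding P_def Z_def N_def by measurable
  have Iint: "integrable \<mu> (indicator A :: _ \<Rightarrow> real)" if "A \<in> sets \<mu>" for A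
    using that by (simp add: integrable_indicator_iff emeasure_eq_measure)
  have "uminus ` P = N"
  proof
    show "uminus ` P \<subseteq> N" unfolding P_def N_def space by auto
    show "N \<subseteq> uminus ` P"
    proof
      fix x assume "x \<in> N"
      then have "-x \<in> P" "x = - (-x)" unfolding P_def N_def space by auto
      then show "x \<in> uminus ` P" by blast
    qed
  qed
  then have PN: "measure \<mu> P = measure \<mu> N"
    using symm \<open>P \<in> sets \<mu>\<close> by (metis measure_def)
  have "P \<union> Z \<union> N = space \<mu>" unfolding P_def Z_def N_def by auto
  then have "measure \<mu> (P \<union> Z \<union> N) = 1" by (simp add: prob_space)
  moreover have "measure \<mu> (P \<union> Z \<union> N) = measure \<mu> P + measure \<mu> Z + measure \<mu> N"
    by (subst finite_measure_Union; (subst finite_measure_Union)?) (auto simp: P_def Z_def N_def)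
  ultimately have part: "2 * measure \<mu> P + measure \<mu> Z = 1" using PN by simp
  have x0: "integral\<^sup>L \<mu> (W lam) = 1/2" using half unfolding box_x0_def W_def by simp
  have key: "AE n in \<mu>. W 0 n = W lam n"
  proof (cases "lam = 0")
    case True then show ?thesis by simp
  next
    case False
    have Zmeas: "measure \<mu> Z = 0 \<and> (AE n in \<mu>. W lam n = indicator P n)"
    proof (cases "lam > 0")
      case True
      have "integral\<^sup>L \<mu> (W lam) \<le> integral\<^sup>L \<mu> (indicator P)"
        by (rule integral_mono[OF Wint Iint]) (simp, (use g_range True in \<open>auto simp: W_def box_weight_def indicator_def P_def\<close>))
      then have "1/2 \<le> measure \<mu> P" using x0 by simp
      then have Z0: "measure \<mu> Z = 0" and P2: "measure \<mu> P = 1/2" using part measure_nonneg[of \<mu> Z] by linarith+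
      have "integral\<^sup>L \<mu> (\<lambda>n. indicator P n - W lam n) = 0"
        using x0 P2 Wint Iint[of P] Iint[of "P \<union> Z"] by (simp add: Bochner_Integration.integral_diff)
      moreover have "AE n in \<mu>. 0 \<le> indicator P n - W lam n"
        by (rule AE_I2) (use g_range True in \<open>auto simp: W_def box_weight_def indicator_def P_def\<close>)
      ultimately have "AE n in \<mu>. indicator P n - W lam n = 0"
        using integral_nonneg_eq_0_iff_AE[of \<mu> "\<lambda>n. indicator P n - W lam n"] Wint Iint[of P] Iint[of "P \<union> Z"] by auto
      then show ?thesis using Z0 by auto
    next
      case False
      with \<open>lam \<noteq> 0\<close> have neg: "lam < 0" by simp
      have "integral\<^sup>L \<mu> (indicator (P \<union> Z)) \<le> integral\<^sup>L \<mu> (W lam)"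
        by (rule integral_mono[OF Iint Wint]) (simp, (use g_range neg in \<open>auto simp: W_def box_weight_def indicator_def P_def Z_def\<close>))
      then have "measure \<mu> (P \<union> Z) \<le> 1/2" using x0 by (simp add: Int_absorb2 P_def Z_def)
      moreover have "measure \<mu> (P \<union> Z) = measure \<mu> P + measure \<mu> Z"
        by (subst finite_measure_Union) (auto simp: P_def Z_def)
      ultimately have Z0: "measure \<mu> Z = 0" and P2: "measure \<mu> (P \<union> Z) = 1/2" using part measure_nonneg[of \<mu> Z] by linarith+
      have "integral\<^sup>L \<mu> (\<lambda>n. W lam n - indicator (P \<union> Z) n) = 0"
        using x0 P2 Wint Iint[of P] Iint[of "P \<union> Z"] by (simp add: Bochner_Integration.integral_diff Int_absorb2 P_def Z_def)
      moreover have "AE n in \<mu>. 0 \<le> W lam n - indicator (P \<union> Z) n"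
        by (rule AE_I2) (use g_range neg in \<open>auto simp: W_def box_weight_def indicator_def P_def Z_def\<close>)
      ultimately have A: "AE n in \<mu>. W lam n - indicator (P \<union> Z) n = 0"
        using integral_nonneg_eq_0_iff_AE[of \<mu> "\<lambda>n. W lam n - indicator (P \<union> Z) n"] Wint Iint[of P] Iint[of "P \<union> Z"] by auto
      have "Z \<in> null_sets \<mu>" using Z0 by (simp add: emeasure_eq_measure null_setsI)
      then have "AE n in \<mu>. n \<notin> Z" by (rule AE_not_in)
      with A have "AE n in \<mu>. W lam n = indicator P n"
        by eventually_elim (auto simp: indicator_def)
      then show ?thesis using Z0 by auto
    qed
    then have "Z \<in> null_sets \<mu>" by (simp add: emeasure_eq_measure null_setsI)
    then have "AE n in \<mu>. n \<notin> Z" by (rule AE_not_in)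
    moreover have "AE n in \<mu>. W lam n = indicator P n" using Zmeas by simp
    moreover note AE_space
    ultimately show ?thesis
      by eventually_elim (auto simp: W_def box_weight_def indicator_def P_def Z_def)
  qed
  have "box_b \<mu> 0 n0 g = integral\<^sup>L \<mu> (\<lambda>n. W 0 n *\<^sub>R n)" unfolding box_b_def W_def ..
  also have "\<dots> = integral\<^sup>L \<mu> (\<lambda>n. W lam n *\<^sub>R n)"
    by (rule integral_cong_AE[OF Wbm Wbm]) (use key in eventually_elim, simp)
  also have "\<dots> = box_b \<mu> lam n0 g" unfolding box_b_def W_def ..
  finally show ?thesis .
qed
end
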